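(* For all $f,f_1\in\mathcal B(\mathcal X)$, $$e^{-\|f-f_0\|_\infty}e^{-\|f\|_\infty}\Lambda q_1\|f_1-P_X(f_1)\|_{L_2}^2\le D^2\ell_\star(f)(f_1,f_1)\le e^{\|f-f_0\|_\infty}e^{\|f\|_\infty}\Lambda\|f_1\|_{L_2}^2,$$ where $D^2\ell_\star(f)(f_1,f_1)=\frac{d^2}{d\epsilon^2}\ell_\star(f+\epsilon f_1)\big|_{\epsilon=0}$ (which exists).
   Context: Survival setup. Let $\mathcal X$ be a locally compact metric space in which every open set is $\sigma$-compact, with its Borel $\sigma$-algebra; $\mathcal B(\mathcal X)$ denotes the bounded measurable functions $\mathcal X\to\mathbb R$ and $\|f\|_\infty=\sup_{x}|f(x)|$. Let $(X,T_S,T_C)$ be a random vector in $\mathcal X\times(0,\infty)\times(0,\infty)$ with $T_S,T_C$ conditionally independent given $X$. Write $P_X$ for the law of $X$; $P_X(f)=\int f\,dP_X$; $\|\cdot\|_{L_2}$ refers to $L_2(P_X)$. Set $T=T_S\wedge T_C$, $q(x,t)=\mathbb P(T\ge t\mid X=x)$, and assume $q_1:=\inf_{x\in\mathcal X}q(x,1)>0$. Assume $-\frac{d}{dt}\log\mathbb P(T_S>t\mid X=x)=\lambda_0(t)e^{f_0(x)}$ for $t\in[0,1]$ and $P_X$-a.e. $x$, where $\lambda_0:[0,1]\to[0,\infty)$ is measurable and $f_0\in\mathcal B(\mathcal X)$ with $P_X(f_0)=0$; let $\Lambda=\int_0^1\lambda_0(t)\,dt$ (which is finite). For $f\in\mathcal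 B(\mathcal X)$ define $S(f,t)=\int_{\mathcal X}q(x,t)e^{f(x)}dP_X(x)$ and the limiting negative log-partial likelihood $\ell_\star(f)=\int_0^1\log S(f,t)\,S(f_0,t)\lambda_0(t)\,dt-\int_0^1\int_{\mathcal X}q(x,t)e^{f_0(x)}f(x)\,dP_X(x)\,\lambda_0(t)\,dt$. *)

theory Defs
  imports "HOL-Probability.Probability"
begin

text \<open>Sup norm over the whole space (not an essential sup).\<close>
definition supnorm :: "('a \<Rightarrow> real) \<Rightarrow> real" where
  "supnorm f = (SUP x. \<bar>f x\<bar>)"

definition bdd_meas :: "('a::topological_space \<Rightarrow> real) set" where
  "bdd_meas = {f. f \<in> borel_measurable borel \<and> bounded (range f)}"

definition open_sigma_compact :: "'a::topological_space itself \<Rightarrow> bool" where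
  "open_sigma_compact _ = (\<forall>U::'a set. open U \<longrightarrow>
      (\<exists>F. countable F \<and> (\<forall>K\<in>F. compact K) \<and> \<Union>F = U))"

text \<open>At-risk function q(x,t) = P(T \<ge> t | X = x), with T = min T_S T_C and
  T_S, T_C conditionally independent given X with conditional laws KS x, KC x.\<close>
definition atrisk :: "('a \<Rightarrow> real measure) \<Rightarrow> ('a \<Rightarrow> real measure) \<Rightarrow> 'a \<Rightarrow> real \<Rightarrow> real" where
  "atrisk KS KC x t = measure (KS x) {t..} * measure (KC x) {t..}"

definition L2norm :: "'a measure \<Rightarrow> ('a \<Rightarrow> real) \<Rightarrow> real" where
  "L2norm P g = sqrt (\<integral>x. (g x)\<^sup>2 \<partial>P)"

definition Sfun :: "'a measure \<Rightarrow> ('a \<Rightarrow> real \<Rightarrow> real) \<Rightarrow> ('a \<Rightarrow> real) \<Rightarrow> real \<Rightarrow> real" where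
  "Sfun P q f t = (\<integral>x. q x t * exp (f x) \<partial>P)"

definition ell_star :: "'a measure \<Rightarrow> ('a \<Rightarrow> real \<Rightarrow> real) \<Rightarrow> (real \<Rightarrow> real)
    \<Rightarrow> ('a \<Rightarrow> real) \<Rightarrow> ('a \<Rightarrow> real) \<Rightarrow> real" where
  "ell_star P q lam f0 f =
     (LINT t:{0..1}|lborel. ln (Sfun P q f t) * Sfun P q f0 t * lam t)
   - (LINT t:{0..1}|lborel. (\<integral>x. q x t * exp (f0 x) * f x \<partial>P) * lam t)"

end

theory Submission
  imports Defs
begin

lemma lip_from_deriv:
  fixes k k' :: "real \<Rightarrow> real"
  assumes d: "\<And>s. lo \<le> s \<Longrightarrow> s \<le> hi \<Longrightarrow> (k has_real_derivative k' s) (at s)"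
    and bd: "\<And>s. lo \<le> s \<Longrightarrow> s \<le> hi \<Longrightarrow> \<bar>k' s\<bar> \<le> B"
    and ab: "lo \<le> a" "a \<le> hi" "lo \<le> b" "b \<le> hi"
  shows "\<bar>k b - k a\<bar> \<le> B * \<bar>b - a\<bar>"
proof -
  have *: "\<bar>k v - k u\<bar> \<le> B * \<bar>v - u\<bar>" if "lo \<le> u" "u < v" "v \<le> hi" for u v
  proof -
    have "\<exists>z>u. z < v \<and> k v - k u = (v - u) * k' z"
      by (rule MVT2) (use that in \<open>auto intro: d\<close>)
    then obtain z where z: "u < z" "z < v" "k v - k u = (v - u) * k' z" by blast
    have "\<bar>k v - k u\<bar> = \<bar>v - u\<bar> * \<bar>k' z\<bar>" using z by (simp add: abs_mult)
    also have "\<dots> \<le> \<bar>v - u\<bar> * B" using bd[of z] z that by (intro mult_left_mono) auto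
    finally show ?thesis by (simp add: mult.commute)
  qed
  consider "a < b" | "a = b" | "b < a" by linarith
  then show ?thesis
  proof cases
    case 1 then show ?thesis using * ab by auto
  next
    case 2 then show ?thesis by simp
  next
    case 3 then have "\<bar>k a - k b\<bar> \<le> B * \<bar>a - b\<bar>" using *[of b a] ab by auto
    then show ?thesis by (metis abs_minus_commute)
  qed
qed

lemma deriv_from_quad:
  fixes \<phi> :: "real \<Rightarrow> real"
  assumes r: "r > 0" and q: "\<And>e. \<bar>e - e0\<bar> \<le> r \<Longrightarrow> \<bar>\<phi> e - \<phi> e0 - (e - e0) * D\<bar> \<le> C * (e - e0)^2"
  shows "(\<phi> has_real_derivative D) (at e0)"
proof -
  have "((\<lambda>y. (\<phi> y - \<phi> e0) / (y - e0) - D) \<longlongrightarrow> 0) (at e0)"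
  proof (rule Lim_null_comparison)
    show "\<forall>\<^sub>F y in at e0. norm ((\<phi> y - \<phi> e0) / (y - e0) - D) \<le> C * \<bar>y - e0\<bar>"
      unfolding eventually_at
    proof (intro exI[of _ r] conjI ballI allI impI)
      fix y assume y: "y \<noteq> e0 \<and> dist y e0 < r"
      then have ne: "y - e0 \<noteq> 0" by simp
      have "(\<phi> y - \<phi> e0) / (y - e0) - D = (\<phi> y - \<phi> e0 - (y - e0) * D) / (y - e0)"
        using ne by (simp add: field_simps)
      then have "norm ((\<phi> y - \<phi> e0) / (y - e0) - D) = \<bar>\<phi> y - \<phi> e0 - (y - e0) * D\<bar> / \<bar>y - e0\<bar>"
        by (simp add: abs_divide)
      also have "\<dots> \<le> C * (y - e0)^2 / \<bar>y - e0\<bar>"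
        using q[of y] y by (intro divide_right_mono) (auto simp: dist_real_def)
      also have "\<dots> = C * \<bar>y - e0\<bar>"
      proof -
        have "y - e0 > 0 \<or> y - e0 < 0" using ne by linarith
        then show ?thesis by (auto simp: power2_eq_square field_simps)
      qed
      finally show "norm ((\<phi> y - \<phi> e0) / (y - e0) - D) \<le> C * \<bar>y - e0\<bar>" .
    qed (use r in auto)
    have "((\<lambda>y. C * \<bar>y - e0\<bar>) \<longlongrightarrow> C * \<bar>e0 - e0\<bar>) (at e0)"
      by (intro tendsto_intros)
    then show "((\<lambda>y. C * \<bar>y - e0\<bar>) \<longlongrightarrow> 0) (at e0)" by simp
  qed
  then have "((\<lambda>y. (\<phi> y - \<phi> e0) / (y - e0)) \<longlongrightarrow> D) (at e0)"
    by (simp add: LIM_zero_iff)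
  then show ?thesis by (simp add: has_field_derivative_iff)
qed

lemma deriv_integral:
  fixes h hd hdd :: "real \<Rightarrow> 'a \<Rightarrow> real" and M :: "'a measure"
  assumes r: "r > 0"
    and d1: "\<And>x e. x \<in> space M \<Longrightarrow> \<bar>e - e0\<bar> \<le> r \<Longrightarrow> ((\<lambda>e. h e x) has_real_derivative hd e x) (at e)"
    and d2: "\<And>x e. x \<in> space M \<Longrightarrow> \<bar>e - e0\<bar> \<le> r \<Longrightarrow> ((\<lambda>e. hd e x) has_real_derivative hdd e x) (at e)"
    and bd: "\<And>x e. x \<in> space M \<Longrightarrow> \<bar>e - e0\<bar> \<le> r \<Longrightarrow> \<bar>hdd e x\<bar> \<le> L x"
    and iL: "integrable M L"
    and ih: "\<And>e. \<bar>e - e0\<bar> \<le> r \<Longrightarrow> integrable M (h e)"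
    and ih1: "integrable M (hd e0)"
  shows "((\<lambda>e. \<integral>x. h e x \<partial>M) has_real_derivative (\<integral>x. hd e0 x \<partial>M)) (at e0)"
proof (rule deriv_from_quad[OF r])
  fix e assume e: "\<bar>e - e0\<bar> \<le> r"
  have tay: "\<bar>h e x - h e0 x - (e - e0) * hd e0 x\<bar> \<le> L x * (e - e0)^2" if x: "x \<in> space M" for x
  proof -
    define k where "k s = h s x - (s - e0) * hd e0 x" for s
    have kd: "(k has_real_derivative (hd s x - hd e0 x)) (at s)" if "min e e0 \<le> s" "s \<le> max e e0" for s
      unfolding k_def using that e
      by (auto intro!: derivative_eq_intros d1[OF x])
    have kb: "\<bar>hd s x - hd e0 x\<bar> \<le> L x * \<bar>e - e0\<bar>" if "min e e0 \<le> s" "s \<le> max e e0" for s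
    proof -
      have "\<bar>hd s x - hd e0 x\<bar> \<le> L x * \<bar>s - e0\<bar>"
        by (rule lip_from_deriv[where lo="min e e0" and hi="max e e0" and k'="\<lambda>s. hdd s x"])
          (use that e in \<open>auto intro: d2[OF x] bd[OF x]\<close>)
      also have "\<dots> \<le> L x * \<bar>e - e0\<bar>"
      proof (rule mult_left_mono)
        show "0 \<le> L x" using bd[OF x, of e0] r by auto
      qed (use that in auto)
      finally show ?thesis .
    qed
    have "\<bar>k e - k e0\<bar> \<le> (L x * \<bar>e - e0\<bar>) * \<bar>e - e0\<bar>"
      by (rule lip_from_deriv[where lo="min e e0" and hi="max e e0"]) (use kd kb in auto)
    then show ?thesis unfolding k_def by (simp add: power2_eq_square mult.assoc)
  qed
  have ie: "integrable M (h e)" "integrable M (h e0)" using ih e r by auto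
  have "(\<integral>x. h e x \<partial>M) - (\<integral>x. h e0 x \<partial>M) - (e - e0) * (\<integral>x. hd e0 x \<partial>M)
      = (\<integral>x. h e x - h e0 x - (e - e0) * hd e0 x \<partial>M)"
    using ie ih1 by simp
  also have "\<bar>\<dots>\<bar> \<le> (\<integral>x. \<bar>h e x - h e0 x - (e - e0) * hd e0 x\<bar> \<partial>M)"
    by (rule integral_abs_bound)
  also have "\<dots> \<le> (\<integral>x. L x * (e - e0)^2 \<partial>M)"
    by (rule integral_mono) (use ie ih1 iL tay in auto)
  also have "\<dots> = (\<integral>x. L x \<partial>M) * (e - e0)^2" by simp
  finally show "\<bar>(\<integral>x. h e x \<partial>M) - (\<integral>x. h e0 x \<partial>M) - (e - e0) * (\<integral>x. hd e0 x \<partial>M)\<bar>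
     \<le> (\<integral>x. L x \<partial>M) * (e - e0)^2" .
qed

lemma bdd_meas_bound:
  assumes "g \<in> bdd_meas"
  shows "\<bar>g x\<bar> \<le> supnorm g" "0 \<le> supnorm g"
proof -
  from assms have "bounded (range g)" by (simp add: bdd_meas_def)
  then obtain a where a: "\<And>y. \<bar>g y\<bar> \<le> a" unfolding bounded_iff by auto
  have bdd: "bdd_above (range (\<lambda>x. \<bar>g x\<bar>))" using a by (auto intro!: bdd_aboveI[where M=a])
  show 1: "\<bar>g x\<bar> \<le> supnorm g" unfolding supnorm_def by (rule cSUP_upper[OF _ bdd]) simp
  show "0 \<le> supnorm g" using 1 abs_ge_zero order_trans by blast
qed

lemma bdd_meas_diff:
  assumes "g \<in> bdd_meas" "h \<in> bdd_meas"
  shows "(\<lambda>x. g x - h x) \<in> bdd_meas"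
proof -
  have "\<bar>g x - h x\<bar> \<le> supnorm g + supnorm h" for x
    using bdd_meas_bound(1)[OF assms(1), of x] bdd_meas_bound(1)[OF assms(2), of x] by linarith
  then have "bounded (range (\<lambda>x. g x - h x))" unfolding bounded_iff by auto
  then show ?thesis using assms by (auto simp: bdd_meas_def)
qed

locale surv =
  fixes PX :: "'a::metric_space measure"
    and KS KC :: "'a \<Rightarrow> real measure"
    and lam :: "real \<Rightarrow> real"
    and f0 f f1 :: "'a \<Rightarrow> real"
  assumes PX: "prob_space PX" "sets PX = sets borel"
    and KS: "KS \<in> borel \<rightarrow>\<^sub>M prob_algebra borel"
    and KC: "KC \<in> borel \<rightarrow>\<^sub>M prob_algebra borel"
    and q1pos: "(INF x. atrisk KS KC x 1) > 0"
    and lam_meas: "lam \<in> borel_measurable lborel"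
    and lam_nonneg: "\<And>t. t \<in> {0..1} \<Longrightarrow> lam t \<ge> 0"
    and lam_int: "set_integrable lborel {0..1} lam"
    and f0: "f0 \<in> bdd_meas"
    and f: "f \<in> bdd_meas"
    and f1: "f1 \<in> bdd_meas"
begin

abbreviation "Q \<equiv> atrisk KS KC"
definition "q1 = (INF x. Q x 1)"

lemma KS_prob: "prob_space (KS x)" "sets (KS x) = sets borel"
  using measurable_space[OF KS, of x] by (auto simp: space_prob_algebra)
lemma KC_prob: "prob_space (KC x)" "sets (KC x) = sets borel"
  using measurable_space[OF KC, of x] by (auto simp: space_prob_algebra)

lemma Q_nonneg: "0 \<le> Q x t" unfolding atrisk_def by simp
lemma Q_le1: "Q x t \<le> 1"
proof -
  have "measure (KS x) {t..} \<le> 1" "measure (KC x) {t..} \<le> 1"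
    using prob_space.prob_le_1[OF KS_prob(1)] prob_space.prob_le_1[OF KC_prob(1)] by auto
  then show ?thesis unfolding atrisk_def by (simp add: mult_le_one)
qed

lemma Q_anti: assumes "s \<le> t" shows "Q x t \<le> Q x s"
proof -
  have "measure (KS x) {t..} \<le> measure (KS x) {s..}"
    using assms KS_prob by (intro finite_measure.finite_measure_mono prob_space.finite_measure) auto
  moreover have "measure (KC x) {t..} \<le> measure (KC x) {s..}"
    using assms KC_prob by (intro finite_measure.finite_measure_mono prob_space.finite_measure) auto
  ultimately show ?thesis unfolding atrisk_def by (intro mult_mono) auto
qed

lemma q1_pos: "q1 > 0" using q1pos by (simp add: q1_def)

lemma q1_le: assumes "t \<le> 1" shows "q1 \<le> Q x t"
proof -
  have "bdd_below (range (\<lambda>x. Q x 1))" using Q_nonneg by (auto intro!: bdd_belowI[where m=0])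
  then have "q1 \<le> Q x 1" unfolding q1_def by (rule cINF_lower) simp
  also have "\<dots> \<le> Q x t" using Q_anti assms by blast
  finally show ?thesis .
qed

lemma meas_PX: "g \<in> borel_measurable borel \<Longrightarrow> g \<in> borel_measurable PX"
  using PX(2) measurable_cong_sets by blast

lemma Q_meas[measurable]: "(\<lambda>x. Q x t) \<in> borel_measurable PX"
proof -
  have "(\<lambda>x. measure (KS x) {t..}) \<in> borel_measurable borel"
    by (rule measurable_compose[OF KS measurable_measure_prob_algebra]) simp
  moreover have "(\<lambda>x. measure (KC x) {t..}) \<in> borel_measurable borel"
    by (rule measurable_compose[OF KC measurable_measure_prob_algebra]) simp
  ultimately show ?thesis unfolding atrisk_def by (intro meas_PX borel_measurable_times)
qed

lemma f_meas[measurable]: "f \<in> borel_measurable PX" "f0 \<in> borel_measurable PX" "f1 \<in> borel_measurable PX"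
  using f f0 f1 by (auto simp: bdd_meas_def intro: meas_PX)

lemma fin: "finite_measure PX" using PX(1) prob_space.finite_measure by blast

lemma int_bdd:
  fixes B :: real
  assumes "w \<in> borel_measurable PX" "\<And>x. \<bar>w x\<bar> \<le> B"
  shows "integrable PX w"
  using assms by (intro finite_measure.integrable_const_bound[OF fin, where B=B]) auto

lemma int_Qw:
  fixes B :: real
  assumes "w \<in> borel_measurable PX" "\<And>x. \<bar>w x\<bar> \<le> B"
  shows "integrable PX (\<lambda>x. Q x t * w x)"
proof (rule int_bdd[where B=B])
  show "\<bar>Q x t * w x\<bar> \<le> B" for x
  proof -
    have "\<bar>Q x t * w x\<bar> = Q x t * \<bar>w x\<bar>" using Q_nonneg by (simp add: abs_mult)
    also have "\<dots> \<le> 1 * B" using Q_le1 Q_nonneg assms(2) by (intro mult_mono) auto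
    finally show ?thesis by simp
  qed
qed (use assms in auto)

lemma meas_t:
  fixes B :: real
  assumes w: "w \<in> borel_measurable PX" "\<And>x. \<bar>w x\<bar> \<le> B"
  shows "(\<lambda>t. \<integral>x. Q x t * w x \<partial>PX) \<in> borel_measurable borel"
proof -
  define wp where "wp x = max (w x) 0" for x
  define wn where "wn x = max (- w x) 0" for x
  have wpm: "wp \<in> borel_measurable PX" "wn \<in> borel_measurable PX" using w(1) unfolding wp_def wn_def by auto
  have wpb: "\<bar>wp x\<bar> \<le> B" "\<bar>wn x\<bar> \<le> B" for x using w(2)[of x] unfolding wp_def wn_def by auto
  have anti: "(\<lambda>t. - (\<integral>x. Q x t * v x \<partial>PX)) \<in> borel_measurable borel"
    if v: "v \<in> borel_measurable PX" "\<And>x. \<bar>v x\<bar> \<le> B" "\<And>x. 0 \<le> v x" for v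
  proof (rule borel_measurable_mono)
    show "mono (\<lambda>t. - (\<integral>x. Q x t * v x \<partial>PX))"
    proof (rule monoI)
      fix s t :: real assume "s \<le> t"
      then have "(\<integral>x. Q x t * v x \<partial>PX) \<le> (\<integral>x. Q x s * v x \<partial>PX)"
        using v Q_anti by (intro integral_mono int_Qw[where B=B] mult_right_mono) auto
      then show "- (\<integral>x. Q x s * v x \<partial>PX) \<le> - (\<integral>x. Q x t * v x \<partial>PX)" by simp
    qed
  qed
  have eq: "(\<integral>x. Q x t * w x \<partial>PX) = - (- (\<integral>x. Q x t * wp x \<partial>PX)) + (- (\<integral>x. Q x t * wn x \<partial>PX))" for t
  proof -
    have "(\<lambda>x. Q x t * w x) = (\<lambda>x. Q x t * wp x - Q x t * wn x)"
      unfolding wp_def wn_def by (auto simp: fun_eq_iff max_def algebra_simps)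
    then show ?thesis using int_Qw[OF wpm(1) wpb(1)] int_Qw[OF wpm(2) wpb(2)] by simp
  qed
  show ?thesis unfolding eq
    using anti[OF wpm(1) wpb(1)] anti[OF wpm(2) wpb(2)] unfolding wp_def wn_def by auto
qed


lemma prob_int_le:
  fixes C :: real
  assumes "integrable PX g" "\<And>x. \<bar>g x\<bar> \<le> C"
  shows "\<bar>\<integral>x. g x \<partial>PX\<bar> \<le> C"
proof -
  have "\<bar>\<integral>x. g x \<partial>PX\<bar> \<le> (\<integral>x. \<bar>g x\<bar> \<partial>PX)" by (rule integral_abs_bound)
  also have "\<dots> \<le> (\<integral>x. C \<partial>PX)" using assms by (intro integral_mono) (auto intro: finite_measure.integrable_const[OF fin])
  also have "\<dots> = C" using prob_space.prob_space[OF PX(1)] by simp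
  finally show ?thesis .
qed

lemma prob_int_ge:
  fixes C :: real
  assumes "integrable PX g" "\<And>x. C \<le> g x"
  shows "C \<le> (\<integral>x. g x \<partial>PX)"
proof -
  have "C = (\<integral>x. C \<partial>PX)" using prob_space.prob_space[OF PX(1)] by simp
  also have "\<dots> \<le> (\<integral>x. g x \<partial>PX)" using assms by (intro integral_mono) (auto intro: finite_measure.integrable_const[OF fin])
  finally show ?thesis .
qed

definition "Bf = supnorm f"
definition "B1 = supnorm f1"
definition "B0 = supnorm f0"

lemma Bs: "\<bar>f x\<bar> \<le> Bf" "\<bar>f1 x\<bar> \<le> B1" "\<bar>f0 x\<bar> \<le> B0" "0 \<le> Bf" "0 \<le> B1" "0 \<le> B0"
  using bdd_meas_bound[OF f] bdd_meas_bound[OF f1] bdd_meas_bound[OF f0] by (auto simp: Bf_def B1_def B0_def)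

lemma lin_bound: assumes "\<bar>e\<bar> \<le> R" shows "\<bar>f x + e * f1 x\<bar> \<le> Bf + R * B1"
proof -
  have "\<bar>e * f1 x\<bar> \<le> R * B1" unfolding abs_mult using assms Bs by (intro mult_mono) auto
  then show ?thesis using Bs(1)[of x] by linarith
qed

lemma w_bound:
  assumes "\<bar>e\<bar> \<le> R"
  shows "\<bar>exp (f x + e * f1 x) * f1 x ^ k\<bar> \<le> exp (Bf + R * B1) * B1 ^ k"
proof -
  have "exp (f x + e * f1 x) \<le> exp (Bf + R * B1)" using lin_bound[OF assms, of x] by simp
  moreover have "\<bar>f1 x ^ k\<bar> \<le> B1 ^ k" unfolding power_abs using Bs by (intro power_mono) auto
  ultimately show ?thesis unfolding abs_mult by (intro mult_mono) auto
qed

definition Sk :: "nat \<Rightarrow> real \<Rightarrow> real \<Rightarrow> real" where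
  "Sk k e t = (\<integral>x. Q x t * (exp (f x + e * f1 x) * f1 x ^ k) \<partial>PX)"

lemma w_meas[measurable]: "(\<lambda>x. exp (f x + e * f1 x) * f1 x ^ k) \<in> borel_measurable PX"
  by measurable

lemma Sk_int: "integrable PX (\<lambda>x. Q x t * (exp (f x + e * f1 x) * f1 x ^ k))"
  by (rule int_Qw[OF w_meas w_bound[OF order_refl]])

lemma Sk_bound: assumes "\<bar>e\<bar> \<le> R" shows "\<bar>Sk k e t\<bar> \<le> exp (Bf + R * B1) * B1 ^ k"
  unfolding Sk_def
proof (rule prob_int_le[OF Sk_int])
  fix x
  have "\<bar>Q x t * (exp (f x + e * f1 x) * f1 x ^ k)\<bar> = Q x t * \<bar>exp (f x + e * f1 x) * f1 x ^ k\<bar>"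
    using Q_nonneg by (simp add: abs_mult)
  also have "\<dots> \<le> 1 * (exp (Bf + R * B1) * B1 ^ k)"
    using Q_le1 Q_nonneg w_bound[OF assms] by (intro mult_mono) auto
  finally show "\<bar>Q x t * (exp (f x + e * f1 x) * f1 x ^ k)\<bar> \<le> exp (Bf + R * B1) * B1 ^ k" by simp
qed

lemma Sk0_lower: assumes "\<bar>e\<bar> \<le> R" "t \<le> 1" shows "q1 * exp (- (Bf + R * B1)) \<le> Sk 0 e t"
  unfolding Sk_def
proof (rule prob_int_ge[OF Sk_int])
  fix x
  have "exp (- (Bf + R * B1)) \<le> exp (f x + e * f1 x)" using lin_bound[OF assms(1), of x] by simp
  then have "q1 * exp (- (Bf + R * B1)) \<le> Q x t * exp (f x + e * f1 x)"
    using q1_le[OF assms(2)] q1_pos Q_nonneg by (intro mult_mono) auto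
  then show "q1 * exp (- (Bf + R * B1)) \<le> Q x t * (exp (f x + e * f1 x) * f1 x ^ 0)" by simp
qed

lemma Sk_meas[measurable]: "(\<lambda>t. Sk k e t) \<in> borel_measurable borel"
  unfolding Sk_def by (rule meas_t[OF w_meas w_bound[OF order_refl]])

lemma Sk_deriv: "((\<lambda>e. Sk k e t) has_real_derivative Sk (Suc k) e0 t) (at e0)"
  unfolding Sk_def
proof (rule deriv_integral[where r=1 and hdd="\<lambda>e x. Q x t * (exp (f x + e * f1 x) * f1 x ^ Suc (Suc k))"
      and L="\<lambda>x. exp (Bf + (\<bar>e0\<bar> + 1) * B1) * B1 ^ Suc (Suc k)"])
  fix x e assume e: "\<bar>e - e0\<bar> \<le> 1"
  show "((\<lambda>e. Q x t * (exp (f x + e * f1 x) * f1 x ^ k)) has_real_derivative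
      Q x t * (exp (f x + e * f1 x) * f1 x ^ Suc k)) (at e)"
    by (auto intro!: derivative_eq_intros)
  show "((\<lambda>e. Q x t * (exp (f x + e * f1 x) * f1 x ^ Suc k)) has_real_derivative
      Q x t * (exp (f x + e * f1 x) * f1 x ^ Suc (Suc k))) (at e)"
    by (auto intro!: derivative_eq_intros)
  have "\<bar>e\<bar> \<le> \<bar>e0\<bar> + 1" using e by linarith
  then have wb: "\<bar>exp (f x + e * f1 x) * f1 x ^ Suc (Suc k)\<bar> \<le> exp (Bf + (\<bar>e0\<bar> + 1) * B1) * B1 ^ Suc (Suc k)"
    by (rule w_bound)
  have "\<bar>Q x t * (exp (f x + e * f1 x) * f1 x ^ Suc (Suc k))\<bar> \<le> 1 * (exp (Bf + (\<bar>e0\<bar> + 1) * B1) * B1 ^ Suc (Suc k))"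
    unfolding abs_mult[of "Q x t"] using Q_le1[of x t] Q_nonneg[of x t] wb by (intro mult_mono) auto
  then show "\<bar>Q x t * (exp (f x + e * f1 x) * f1 x ^ Suc (Suc k))\<bar> \<le> exp (Bf + (\<bar>e0\<bar> + 1) * B1) * B1 ^ Suc (Suc k)"
    by simp
next
  show "integrable PX (\<lambda>x. exp (Bf + (\<bar>e0\<bar> + 1) * B1) * B1 ^ Suc (Suc k))"
    by (rule finite_measure.integrable_const[OF fin])
qed (simp_all only: Sk_int zero_less_one)

end

context surv begin

lemma lam_meas'[measurable]: "lam \<in> borel_measurable borel" using lam_meas by simp

lemma lamI_int: "integrable lborel (\<lambda>t. indicator {0..1} t * lam t)"
  using lam_int by (simp add: set_integrable_def)

lemma deriv_set_integral:
  fixes h hd hdd :: "real \<Rightarrow> real \<Rightarrow> real" and C :: real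
  assumes d1: "\<And>t e. t \<in> {0..1} \<Longrightarrow> \<bar>e - e0\<bar> \<le> 1 \<Longrightarrow> ((\<lambda>e. h e t) has_real_derivative hd e t) (at e)"
    and d2: "\<And>t e. t \<in> {0..1} \<Longrightarrow> \<bar>e - e0\<bar> \<le> 1 \<Longrightarrow> ((\<lambda>e. hd e t) has_real_derivative hdd e t) (at e)"
    and bd: "\<And>t e. t \<in> {0..1} \<Longrightarrow> \<bar>e - e0\<bar> \<le> 1 \<Longrightarrow> \<bar>hdd e t\<bar> \<le> C"
    and hb: "\<And>t e. t \<in> {0..1} \<Longrightarrow> \<bar>e - e0\<bar> \<le> 1 \<Longrightarrow> \<bar>h e t\<bar> \<le> C"
    and hdb: "\<And>t. t \<in> {0..1} \<Longrightarrow> \<bar>hd e0 t\<bar> \<le> C"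
    and hm: "\<And>e. (\<lambda>t. h e t) \<in> borel_measurable borel"
    and hdm: "(\<lambda>t. hd e0 t) \<in> borel_measurable borel"
  shows "((\<lambda>e. LINT t:{0..1}|lborel. h e t * lam t) has_real_derivative (LINT t:{0..1}|lborel. hd e0 t * lam t)) (at e0)"
  unfolding set_lebesgue_integral_def
proof (rule deriv_integral[where r=1 and hdd="\<lambda>e t. indicator {0..1} t *\<^sub>R (hdd e t * lam t)"
      and L="\<lambda>t. C * \<bar>indicator {0..1} t * lam t\<bar>"])
  fix t e assume e: "\<bar>e - e0\<bar> \<le> 1"
  show "((\<lambda>e. indicator {0..1} t *\<^sub>R (h e t * lam t)) has_real_derivative indicator {0..1} t *\<^sub>R (hd e t * lam t)) (at e)"
    by (cases "t \<in> {0..1}") (auto intro!: DERIV_cmult_right d1 e simp del: atLeastAtMost_iff)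
  show "((\<lambda>e. indicator {0..1} t *\<^sub>R (hd e t * lam t)) has_real_derivative indicator {0..1} t *\<^sub>R (hdd e t * lam t)) (at e)"
    by (cases "t \<in> {0..1}") (auto intro!: DERIV_cmult_right d2 e simp del: atLeastAtMost_iff)
  show "\<bar>indicator {0..1} t *\<^sub>R (hdd e t * lam t)\<bar> \<le> C * \<bar>indicator {0..1} t * lam t\<bar>"
    by (cases "t \<in> {0..1}") (auto simp: abs_mult intro!: mult_right_mono bd e simp del: atLeastAtMost_iff)
next
  show "integrable lborel (\<lambda>t. C * \<bar>indicator {0..1} t * lam t\<bar>)"
    using lamI_int by auto
next
  fix e assume e: "\<bar>e - e0\<bar> \<le> 1"
  show "integrable lborel (\<lambda>t. indicator {0..1} t *\<^sub>R (h e t * lam t))"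
  proof (rule Bochner_Integration.integrable_bound[where f="\<lambda>t. C * \<bar>indicator {0..1} t * lam t\<bar>"])
    show "integrable lborel (\<lambda>t. C * \<bar>indicator {0..1} t * lam t\<bar>)" using lamI_int by auto
    show "(\<lambda>t. indicator {0..1} t *\<^sub>R (h e t * lam t)) \<in> borel_measurable lborel"
      using hm[of e] by measurable
    show "AE t in lborel. norm (indicator {0..1} t *\<^sub>R (h e t * lam t)) \<le> norm (C * \<bar>indicator {0..1} t * lam t\<bar>)"
    proof (rule AE_I2)
      fix t
      show "norm (indicator {0..1} t *\<^sub>R (h e t * lam t)) \<le> norm (C * \<bar>indicator {0..1} t * lam t\<bar>)"
      proof (cases "t \<in> {0..1}")
        case True
        then have "\<bar>h e t\<bar> * \<bar>lam t\<bar> \<le> \<bar>C\<bar> * \<bar>lam t\<bar>" using hb[OF True e] by (intro mult_right_mono) auto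
        then show ?thesis using True by (simp add: abs_mult)
      qed auto
    qed
  qed
next
  show "integrable lborel (\<lambda>t. indicator {0..1} t *\<^sub>R (hd e0 t * lam t))"
  proof (rule Bochner_Integration.integrable_bound[where f="\<lambda>t. C * \<bar>indicator {0..1} t * lam t\<bar>"])
    show "integrable lborel (\<lambda>t. C * \<bar>indicator {0..1} t * lam t\<bar>)" using lamI_int by auto
    show "(\<lambda>t. indicator {0..1} t *\<^sub>R (hd e0 t * lam t)) \<in> borel_measurable lborel"
      using hdm by measurable
    show "AE t in lborel. norm (indicator {0..1} t *\<^sub>R (hd e0 t * lam t)) \<le> norm (C * \<bar>indicator {0..1} t * lam t\<bar>)"
    proof (rule AE_I2)
      fix t
      show "norm (indicator {0..1} t *\<^sub>R (hd e0 t * lam t)) \<le> norm (C * \<bar>indicator {0..1} t * lam t\<bar>)"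
      proof (cases "t \<in> {0..1}")
        case True
        then have "\<bar>hd e0 t\<bar> * \<bar>lam t\<bar> \<le> \<bar>C\<bar> * \<bar>lam t\<bar>" using hdb[OF True] by (intro mult_right_mono) auto
        then show ?thesis using True by (simp add: abs_mult)
      qed auto
    qed
  qed
qed simp


definition W0 :: "real \<Rightarrow> real" where "W0 t = (\<integral>x. Q x t * exp (f0 x) \<partial>PX)"

lemma W0_meas[measurable]: "W0 \<in> borel_measurable borel"
proof -
  have "\<bar>exp (f0 x)\<bar> \<le> exp B0" for x using Bs(3)[of x] by simp
  then show ?thesis unfolding W0_def[abs_def] by (intro meas_t[where B="exp B0"]) auto
qed

lemma W0_bounds: "0 \<le> W0 t" "W0 t \<le> exp B0"
proof -
  have b: "\<bar>exp (f0 x)\<bar> \<le> exp B0" for x using Bs(3)[of x] by simp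
  have i: "integrable PX (\<lambda>x. Q x t * exp (f0 x))" by (rule int_Qw[OF _ b]) simp
  show "0 \<le> W0 t" unfolding W0_def using Q_nonneg by (intro Bochner_Integration.integral_nonneg) auto
  have "\<bar>W0 t\<bar> \<le> exp B0" unfolding W0_def
  proof (rule prob_int_le[OF i])
    fix x show "\<bar>Q x t * exp (f0 x)\<bar> \<le> exp B0"
    proof -
      have "Q x t * exp (f0 x) \<le> 1 * exp B0"
        using Q_le1[of x t] Q_nonneg[of x t] b[of x] by (intro mult_mono) auto
      then show ?thesis using Q_nonneg[of x t] by (simp add: abs_mult)
    qed
  qed
  then show "W0 t \<le> exp B0" by simp
qed

lemma Sk_deriv_w[derivative_intros]:
  "((\<lambda>e. Sk 0 e t) has_real_derivative Sk 1 e0 t) (at e0 within s)"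
  "((\<lambda>e. Sk 1 e t) has_real_derivative Sk 2 e0 t) (at e0 within s)"
  "((\<lambda>e. Sk 2 e t) has_real_derivative Sk 3 e0 t) (at e0 within s)"
  "((\<lambda>e. Sk (Suc 0) e t) has_real_derivative Sk 2 e0 t) (at e0 within s)"
  using Sk_deriv[of 0 t e0] Sk_deriv[of 1 t e0] Sk_deriv[of 2 t e0]
  by (auto intro: has_field_derivative_at_within simp: numeral_eq_Suc)


lemma alg2: fixes a1 a2 p1 p2 :: real
  assumes "\<bar>a1\<bar> \<le> p1" "\<bar>a2\<bar> \<le> p2"
  shows "\<bar>a2 - a1^2\<bar> \<le> p2 + p1^2"
proof -
  have "\<bar>a1^2\<bar> \<le> p1^2" unfolding power_abs using assms by (intro power_mono) auto
  then show ?thesis using assms abs_triangle_ineq4[of a2 "a1^2"] by linarith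
qed

lemma alg3: fixes a1 a2 a3 p1 p2 p3 :: real
  assumes "\<bar>a1\<bar> \<le> p1" "\<bar>a2\<bar> \<le> p2" "\<bar>a3\<bar> \<le> p3"
  shows "\<bar>a3 - a1 * a2 - 2 * a1 * (a2 - a1^2)\<bar> \<le> p3 + p1 * p2 + 2 * p1 * (p2 + p1^2)"
proof -
  have "\<bar>a1 * a2\<bar> \<le> p1 * p2" unfolding abs_mult using assms by (intro mult_mono) auto
  moreover have "\<bar>2 * a1 * (a2 - a1^2)\<bar> \<le> 2 * p1 * (p2 + p1^2)"
  proof -
    have "\<bar>a1 * (a2 - a1^2)\<bar> \<le> p1 * (p2 + p1^2)"
      unfolding abs_mult using assms(1) alg2[OF assms(1,2)] by (intro mult_mono) auto
    then show ?thesis by (simp add: abs_mult)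
  qed
  ultimately show ?thesis using assms(3) abs_triangle_ineq4[of a3 "a1 * a2"]
      abs_triangle_ineq4[of "a3 - a1 * a2" "2 * a1 * (a2 - a1^2)"] by linarith
qed

definition "EE e0 = Bf + (\<bar>e0\<bar> + 1) * B1"
definition "mm e0 = q1 * exp (- EE e0)"
definition "rho e0 k = exp (EE e0) * B1 ^ k / mm e0"

lemma mm_pos: "mm e0 > 0" using q1_pos by (simp add: mm_def)
lemma rho_nonneg: "rho e0 k \<ge> 0" using mm_pos[of e0] Bs(5) by (simp add: rho_def zero_le_power)

lemma near: "\<bar>e - e0\<bar> \<le> 1 \<Longrightarrow> \<bar>e\<bar> \<le> \<bar>e0\<bar> + (1::real)" by (auto simp: abs_if split: if_splits)

lemma S0_low: "t \<in> {0..1} \<Longrightarrow> \<bar>e - e0\<bar> \<le> 1 \<Longrightarrow> mm e0 \<le> Sk 0 e t"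
  unfolding mm_def EE_def by (rule Sk0_lower[OF near]) auto

lemma S0_pos: "t \<in> {0..1} \<Longrightarrow> \<bar>e - e0\<bar> \<le> 1 \<Longrightarrow> 0 < Sk 0 e t"
  using S0_low mm_pos by (meson less_le_trans)

lemma ratio_b: assumes "t \<in> {0..1}" "\<bar>e - e0\<bar> \<le> 1"
  shows "\<bar>Sk k e t / Sk 0 e t\<bar> \<le> rho e0 k"
proof -
  have pos: "0 < Sk 0 e t" using S0_pos[OF assms] .
  have "\<bar>Sk k e t\<bar> \<le> exp (EE e0) * B1 ^ k" unfolding EE_def by (rule Sk_bound[OF near[OF assms(2)]])
  then have "\<bar>Sk k e t / Sk 0 e t\<bar> \<le> exp (EE e0) * B1 ^ k / Sk 0 e t"
    using pos by (simp add: abs_divide divide_right_mono)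
  also have "\<dots> \<le> exp (EE e0) * B1 ^ k / mm e0"
    using S0_low[OF assms] mm_pos[of e0] Bs pos by (intro divide_left_mono) (auto intro: mult_pos_pos zero_le_power)
  finally show ?thesis unfolding rho_def .
qed

lemma ln_b: assumes "t \<in> {0..1}" "\<bar>e - e0\<bar> \<le> 1"
  shows "\<bar>ln (Sk 0 e t)\<bar> \<le> \<bar>ln (mm e0)\<bar> + \<bar>EE e0\<bar>"
proof -
  have pos: "0 < Sk 0 e t" using S0_pos[OF assms] .
  have "\<bar>Sk 0 e t\<bar> \<le> exp (EE e0) * B1 ^ 0" unfolding EE_def by (rule Sk_bound[OF near[OF assms(2)]])
  then have up: "Sk 0 e t \<le> exp (EE e0)" by simp
  have "ln (mm e0) \<le> ln (Sk 0 e t)" using S0_low[OF assms] mm_pos[of e0] pos by (subst ln_le_cancel_iff) auto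
  moreover have "ln (Sk 0 e t) \<le> EE e0" using up pos by (metis ln_exp ln_le_cancel_iff exp_gt_zero)
  ultimately show ?thesis by linarith
qed

lemma W0_mul: fixes X Y :: real assumes "\<bar>X\<bar> \<le> Y" shows "\<bar>X * W0 t\<bar> \<le> Y * exp B0"
proof -
  have "\<bar>X * W0 t\<bar> = \<bar>X\<bar> * W0 t" using W0_bounds by (simp add: abs_mult)
  also have "\<dots> \<le> Y * exp B0" using assms W0_bounds by (intro mult_mono) auto
  finally show ?thesis .
qed

end

context surv begin
lemma T1: "((\<lambda>e. LINT t:{0..1}|lborel. ln (Sk 0 e t) * W0 t * lam t) has_real_derivative
   (LINT t:{0..1}|lborel. Sk 1 e0 t / Sk 0 e0 t * W0 t * lam t)) (at e0)"
proof (rule deriv_set_integral[where h="\<lambda>e t. ln (Sk 0 e t) * W0 t" and hd="\<lambda>e t. Sk 1 e t / Sk 0 e t * W0 t"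
   and hdd="\<lambda>e t. (Sk 2 e t / Sk 0 e t - (Sk 1 e t / Sk 0 e t)^2) * W0 t"
   and C="(\<bar>ln (mm e0)\<bar> + \<bar>EE e0\<bar> + rho e0 1 + (rho e0 2 + (rho e0 1)^2)) * exp B0"])
  fix t e :: real assume t: "t \<in> {0..1}" and e: "\<bar>e - e0\<bar> \<le> 1"
  note pos = S0_pos[OF t e]
  have r0: "0 \<le> rho e0 k" for k by (rule rho_nonneg)
  show "((\<lambda>e. ln (Sk 0 e t) * W0 t) has_real_derivative Sk 1 e t / Sk 0 e t * W0 t) (at e)"
    using pos by (auto intro!: derivative_eq_intros)
  show "((\<lambda>e. Sk 1 e t / Sk 0 e t * W0 t) has_real_derivative (Sk 2 e t / Sk 0 e t - (Sk 1 e t / Sk 0 e t)^2) * W0 t) (at e)"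
    using pos by (auto intro!: derivative_eq_intros simp: field_simps power2_eq_square)
  have "\<bar>(Sk 2 e t / Sk 0 e t - (Sk 1 e t / Sk 0 e t)^2) * W0 t\<bar> \<le> (rho e0 2 + (rho e0 1)^2) * exp B0"
    by (intro W0_mul alg2 ratio_b t e)
  also have "\<dots> \<le> (\<bar>ln (mm e0)\<bar> + \<bar>EE e0\<bar> + rho e0 1 + (rho e0 2 + (rho e0 1)^2)) * exp B0"
    using r0[of 1] by (intro mult_right_mono) auto
  finally show "\<bar>(Sk 2 e t / Sk 0 e t - (Sk 1 e t / Sk 0 e t)^2) * W0 t\<bar> \<le> (\<bar>ln (mm e0)\<bar> + \<bar>EE e0\<bar> + rho e0 1 + (rho e0 2 + (rho e0 1)^2)) * exp B0" .
  have "\<bar>ln (Sk 0 e t) * W0 t\<bar> \<le> (\<bar>ln (mm e0)\<bar> + \<bar>EE e0\<bar>) * exp B0"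
    by (intro W0_mul ln_b t e)
  also have "\<dots> \<le> (\<bar>ln (mm e0)\<bar> + \<bar>EE e0\<bar> + rho e0 1 + (rho e0 2 + (rho e0 1)^2)) * exp B0"
    using r0[of 1] r0[of 2] by (intro mult_right_mono) auto
  finally show "\<bar>ln (Sk 0 e t) * W0 t\<bar> \<le> (\<bar>ln (mm e0)\<bar> + \<bar>EE e0\<bar> + rho e0 1 + (rho e0 2 + (rho e0 1)^2)) * exp B0" .
next
  fix t :: real assume t: "t \<in> {0..1}"
  have r0: "0 \<le> rho e0 k" for k by (rule rho_nonneg)
  have "\<bar>Sk 1 e0 t / Sk 0 e0 t * W0 t\<bar> \<le> rho e0 1 * exp B0"
    by (intro W0_mul ratio_b t) simp
  also have "\<dots> \<le> (\<bar>ln (mm e0)\<bar> + \<bar>EE e0\<bar> + rho e0 1 + (rho e0 2 + (rho e0 1)^2)) * exp B0"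
    using r0[of 1] r0[of 2] by (intro mult_right_mono) auto
  finally show "\<bar>Sk 1 e0 t / Sk 0 e0 t * W0 t\<bar> \<le> (\<bar>ln (mm e0)\<bar> + \<bar>EE e0\<bar> + rho e0 1 + (rho e0 2 + (rho e0 1)^2)) * exp B0" .
next
  fix e
  show "(\<lambda>t. ln (Sk 0 e t) * W0 t) \<in> borel_measurable borel"
    by (intro borel_measurable_times borel_measurable_ln Sk_meas W0_meas)
next
  show "(\<lambda>t. Sk 1 e0 t / Sk 0 e0 t * W0 t) \<in> borel_measurable borel"
    by (intro borel_measurable_times borel_measurable_divide Sk_meas W0_meas)
qed

end

context surv begin
definition "c2 e0 = (rho e0 2 + (rho e0 1)^2)"
definition "c3 e0 = (rho e0 3 + rho e0 1 * rho e0 2 + 2 * rho e0 1 * (rho e0 2 + (rho e0 1)^2))"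
lemma c2_nonneg: "0 \<le> c2 e0" unfolding c2_def by (intro add_nonneg_nonneg rho_nonneg zero_le_power2)
lemma c3_nonneg: "0 \<le> c3 e0" unfolding c3_def
  by (intro add_nonneg_nonneg mult_nonneg_nonneg rho_nonneg zero_le_power2) simp

lemma T2: "((\<lambda>e. LINT t:{0..1}|lborel. Sk 1 e t / Sk 0 e t * W0 t * lam t) has_real_derivative
   (LINT t:{0..1}|lborel. (Sk 2 e0 t / Sk 0 e0 t - (Sk 1 e0 t / Sk 0 e0 t)^2) * W0 t * lam t)) (at e0)"
proof (rule deriv_set_integral[where h="\<lambda>e t. Sk 1 e t / Sk 0 e t * W0 t"
   and hd="\<lambda>e t. (Sk 2 e t / Sk 0 e t - (Sk 1 e t / Sk 0 e t)^2) * W0 t"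
   and hdd="\<lambda>e t. (Sk 3 e t / Sk 0 e t - Sk 1 e t / Sk 0 e t * (Sk 2 e t / Sk 0 e t) - 2 * (Sk 1 e t / Sk 0 e t) * (Sk 2 e t / Sk 0 e t - (Sk 1 e t / Sk 0 e t)^2)) * W0 t"
   and C="(rho e0 1 + c2 e0 + c3 e0) * exp B0"])
  fix t e :: real assume t: "t \<in> {0..1}" and e: "\<bar>e - e0\<bar> \<le> 1"
  note pos = S0_pos[OF t e]
  have r0: "0 \<le> rho e0 k" for k by (rule rho_nonneg)
  show "((\<lambda>e. Sk 1 e t / Sk 0 e t * W0 t) has_real_derivative (Sk 2 e t / Sk 0 e t - (Sk 1 e t / Sk 0 e t)^2) * W0 t) (at e)"
    using pos by (auto intro!: derivative_eq_intros simp: field_simps power2_eq_square)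
  show "((\<lambda>e. (Sk 2 e t / Sk 0 e t - (Sk 1 e t / Sk 0 e t)^2) * W0 t) has_real_derivative
     (Sk 3 e t / Sk 0 e t - Sk 1 e t / Sk 0 e t * (Sk 2 e t / Sk 0 e t) - 2 * (Sk 1 e t / Sk 0 e t) * (Sk 2 e t / Sk 0 e t - (Sk 1 e t / Sk 0 e t)^2)) * W0 t) (at e)"
    using pos by (auto intro!: derivative_eq_intros simp: field_simps power2_eq_square)
  have "\<bar>(Sk 3 e t / Sk 0 e t - Sk 1 e t / Sk 0 e t * (Sk 2 e t / Sk 0 e t) - 2 * (Sk 1 e t / Sk 0 e t) * (Sk 2 e t / Sk 0 e t - (Sk 1 e t / Sk 0 e t)^2)) * W0 t\<bar>
     \<le> c3 e0 * exp B0"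
    unfolding c3_def by (intro W0_mul alg3 ratio_b t e)
  also have "\<dots> \<le> (rho e0 1 + c2 e0 + c3 e0) * exp B0"
    using r0[of 1] c2_nonneg[of e0] c3_nonneg[of e0] by (intro mult_right_mono) auto
  finally show "\<bar>(Sk 3 e t / Sk 0 e t - Sk 1 e t / Sk 0 e t * (Sk 2 e t / Sk 0 e t) - 2 * (Sk 1 e t / Sk 0 e t) * (Sk 2 e t / Sk 0 e t - (Sk 1 e t / Sk 0 e t)^2)) * W0 t\<bar>
     \<le> (rho e0 1 + c2 e0 + c3 e0) * exp B0" .
  have "\<bar>Sk 1 e t / Sk 0 e t * W0 t\<bar> \<le> rho e0 1 * exp B0"
    by (intro W0_mul ratio_b t e)
  also have "\<dots> \<le> (rho e0 1 + c2 e0 + c3 e0) * exp B0"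
    using r0[of 1] c2_nonneg[of e0] c3_nonneg[of e0] by (intro mult_right_mono) auto
  finally show "\<bar>Sk 1 e t / Sk 0 e t * W0 t\<bar> \<le> (rho e0 1 + c2 e0 + c3 e0) * exp B0" .
next
  fix t :: real assume t: "t \<in> {0..1}"
  have r0: "0 \<le> rho e0 k" for k by (rule rho_nonneg)
  have "\<bar>(Sk 2 e0 t / Sk 0 e0 t - (Sk 1 e0 t / Sk 0 e0 t)^2) * W0 t\<bar> \<le> c2 e0 * exp B0"
    unfolding c2_def by (intro W0_mul alg2 ratio_b t) simp_all
  also have "\<dots> \<le> (rho e0 1 + c2 e0 + c3 e0) * exp B0"
    using r0[of 1] c2_nonneg[of e0] c3_nonneg[of e0] by (intro mult_right_mono) auto
  finally show "\<bar>(Sk 2 e0 t / Sk 0 e0 t - (Sk 1 e0 t / Sk 0 e0 t)^2) * W0 t\<bar> \<le> (rho e0 1 + c2 e0 + c3 e0) * exp B0" .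
next
  fix e
  show "(\<lambda>t. Sk 1 e t / Sk 0 e t * W0 t) \<in> borel_measurable borel"
    by (intro borel_measurable_times borel_measurable_divide Sk_meas W0_meas)
next
  show "(\<lambda>t. (Sk 2 e0 t / Sk 0 e0 t - (Sk 1 e0 t / Sk 0 e0 t)^2) * W0 t) \<in> borel_measurable borel"
    by (intro borel_measurable_times borel_measurable_divide borel_measurable_diff borel_measurable_power Sk_meas W0_meas)
qed

end

context surv begin

lemma set_int_bdd:
  fixes g :: "real \<Rightarrow> real" and C :: real
  assumes gm: "g \<in> borel_measurable borel" and gb: "\<And>t. t \<in> {0..1} \<Longrightarrow> \<bar>g t\<bar> \<le> C"
  shows "set_integrable lborel {0..1} (\<lambda>t. g t * lam t)"
  unfolding set_integrable_def
proof (rule Bochner_Integration.integrable_bound[where f="\<lambda>t. C * \<bar>indicator {0..1} t * lam t\<bar>"])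
  show "integrable lborel (\<lambda>t. C * \<bar>indicator {0..1} t * lam t\<bar>)" using lamI_int by auto
  show "(\<lambda>t. indicator {0..1} t *\<^sub>R (g t * lam t)) \<in> borel_measurable lborel"
    using gm by measurable
  show "AE t in lborel. norm (indicator {0..1} t *\<^sub>R (g t * lam t)) \<le> norm (C * \<bar>indicator {0..1} t * lam t\<bar>)"
  proof (rule AE_I2)
    fix t
    show "norm (indicator {0..1} t *\<^sub>R (g t * lam t)) \<le> norm (C * \<bar>indicator {0..1} t * lam t\<bar>)"
    proof (cases "t \<in> {0..1}")
      case True
      then have "\<bar>g t\<bar> * \<bar>lam t\<bar> \<le> \<bar>C\<bar> * \<bar>lam t\<bar>" using gb[OF True] by (intro mult_right_mono) auto
      then show ?thesis using True by (simp add: abs_mult)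
    qed auto
  qed
qed

definition "At t = (\<integral>x. Q x t * (exp (f0 x) * f x) \<partial>PX)"
definition "Bt t = (\<integral>x. Q x t * (exp (f0 x) * f1 x) \<partial>PX)"

lemma ef_bound: "\<bar>exp (f0 x) * g x\<bar> \<le> exp B0 * G" if "\<And>x. \<bar>g x\<bar> \<le> G" for g :: "'a \<Rightarrow> real" and G
proof -
  have "exp (f0 x) \<le> exp B0" using Bs(3)[of x] by simp
  then show ?thesis unfolding abs_mult using that[of x] by (intro mult_mono) auto
qed

lemma ef_int: "integrable PX (\<lambda>x. Q x t * (exp (f0 x) * f x))" "integrable PX (\<lambda>x. Q x t * (exp (f0 x) * f1 x))"
  by (rule int_Qw[OF _ ef_bound[OF Bs(1)]], simp) (rule int_Qw[OF _ ef_bound[OF Bs(2)]], simp)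

lemma AB_meas: "At \<in> borel_measurable borel" "Bt \<in> borel_measurable borel"
  unfolding At_def[abs_def] Bt_def[abs_def]
  by (rule meas_t[OF _ ef_bound[OF Bs(1)]], simp) (rule meas_t[OF _ ef_bound[OF Bs(2)]], simp)

lemma AB_bound: "\<bar>At t\<bar> \<le> exp B0 * Bf" "\<bar>Bt t\<bar> \<le> exp B0 * B1"
proof -
  have *: "\<bar>Q x t * w x\<bar> \<le> W" if "\<bar>w x\<bar> \<le> W" for w :: "'a \<Rightarrow> real" and W x
  proof -
    have "\<bar>Q x t * w x\<bar> = Q x t * \<bar>w x\<bar>" using Q_nonneg by (simp add: abs_mult)
    also have "\<dots> \<le> 1 * W" using Q_le1[of x t] Q_nonneg[of x t] that by (intro mult_mono) auto
    finally show ?thesis by simp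
  qed
  show "\<bar>At t\<bar> \<le> exp B0 * Bf" unfolding At_def
    by (rule prob_int_le[OF ef_int(1)], rule *[where w="\<lambda>x. exp (f0 x) * f x"], rule ef_bound[where g=f], rule Bs)
  show "\<bar>Bt t\<bar> \<le> exp B0 * B1" unfolding Bt_def
    by (rule prob_int_le[OF ef_int(2)], rule *[where w="\<lambda>x. exp (f0 x) * f1 x"], rule ef_bound[where g=f1], rule Bs)
qed

lemma inner_eq: "(\<integral>x. Q x t * exp (f0 x) * (f x + e * f1 x) \<partial>PX) = At t + e * Bt t"
proof -
  have "(\<lambda>x. Q x t * exp (f0 x) * (f x + e * f1 x)) = (\<lambda>x. Q x t * (exp (f0 x) * f x) + e * (Q x t * (exp (f0 x) * f1 x)))"
    by (auto simp: fun_eq_iff algebra_simps)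
  then show ?thesis unfolding At_def Bt_def using ef_int by simp
qed

lemma T3: "((\<lambda>e. LINT t:{0..1}|lborel. (At t + e * Bt t) * lam t) has_real_derivative
   (LINT t:{0..1}|lborel. Bt t * lam t)) (at e0)"
proof (rule deriv_set_integral[where h="\<lambda>e t. At t + e * Bt t" and hd="\<lambda>e t. Bt t" and hdd="\<lambda>e t. 0"
   and C="exp B0 * Bf + (\<bar>e0\<bar> + 1) * (exp B0 * B1)"])
  fix t e :: real assume t: "t \<in> {0..1}" and e: "\<bar>e - e0\<bar> \<le> 1"
  have n: "0 \<le> exp B0 * Bf" "0 \<le> exp B0 * B1" using Bs by auto
  show "((\<lambda>e. At t + e * Bt t) has_real_derivative Bt t) (at e)"
    by (auto intro!: derivative_eq_intros)
  show "((\<lambda>e. Bt t) has_real_derivative 0) (at e)" by (rule DERIV_const)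
  show "\<bar>0::real\<bar> \<le> exp B0 * Bf + (\<bar>e0\<bar> + 1) * (exp B0 * B1)" using n by simp
  have "\<bar>e * Bt t\<bar> \<le> (\<bar>e0\<bar> + 1) * (exp B0 * B1)"
    unfolding abs_mult using near[OF e] AB_bound(2)[of t] by (intro mult_mono) auto
  then show "\<bar>At t + e * Bt t\<bar> \<le> exp B0 * Bf + (\<bar>e0\<bar> + 1) * (exp B0 * B1)"
    using AB_bound(1)[of t] abs_triangle_ineq[of "At t" "e * Bt t"] by linarith
next
  fix t :: real
  have n: "0 \<le> exp B0 * Bf" "0 \<le> (\<bar>e0\<bar> + 1) * (exp B0 * B1)" using Bs by auto
  have "\<bar>Bt t\<bar> \<le> 1 * (exp B0 * B1)" using AB_bound(2)[of t] by simp
  also have "\<dots> \<le> (\<bar>e0\<bar> + 1) * (exp B0 * B1)" using Bs by (intro mult_right_mono) auto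
  finally show "\<bar>Bt t\<bar> \<le> exp B0 * Bf + (\<bar>e0\<bar> + 1) * (exp B0 * B1)" using n by linarith
next
  fix e
  show "(\<lambda>t. At t + e * Bt t) \<in> borel_measurable borel"
    by (intro borel_measurable_add borel_measurable_times borel_measurable_const AB_meas)
next
  show "(\<lambda>t. Bt t) \<in> borel_measurable borel" using AB_meas(2) by simp
qed

end

context surv begin

definition "dd = supnorm (\<lambda>x. f x - f0 x)"
lemma dd_bound: "\<bar>f x - f0 x\<bar> \<le> dd" "0 \<le> dd"
  using bdd_meas_bound[OF bdd_meas_diff[OF f f0]] by (auto simp: dd_def)

lemma int_k: "integrable PX (\<lambda>x. Q x t * (exp (f x) * f1 x ^ k))"
  using Sk_int[of t 0 k] by simp

lemma Sk_zero: "Sk k 0 t = (\<integral>x. Q x t * (exp (f x) * f1 x ^ k) \<partial>PX)"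
  by (simp add: Sk_def)

lemma f1_int: "integrable PX f1" by (rule int_bdd[OF _ Bs(2)]) simp
lemma f1sq_int: "integrable PX (\<lambda>x. (f1 x - c)^2)"
proof (rule int_bdd[where B="(B1 + \<bar>c\<bar>)^2"])
  fix x
  have "\<bar>f1 x - c\<bar> \<le> B1 + \<bar>c\<bar>" using Bs(2)[of x] by linarith
  then have "\<bar>f1 x - c\<bar>^2 \<le> (B1 + \<bar>c\<bar>)^2" by (intro power_mono) auto
  then show "\<bar>(f1 x - c)^2\<bar> \<le> (B1 + \<bar>c\<bar>)^2" by simp
qed simp

lemma W0_vs: "exp (- dd) * Sk 0 0 t \<le> W0 t" "W0 t \<le> exp dd * Sk 0 0 t"
proof -
  have i0: "integrable PX (\<lambda>x. Q x t * exp (f x))" using int_k[of t 0] by simp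
  have iW: "integrable PX (\<lambda>x. Q x t * exp (f0 x))"
    by (rule int_Qw[where B="exp B0"]) (use Bs(3) in \<open>auto simp: abs_le_iff\<close>)
  have "exp (- dd) * Sk 0 0 t = (\<integral>x. exp (- dd) * (Q x t * exp (f x)) \<partial>PX)"
    by (simp add: Sk_zero)
  also have "\<dots> \<le> W0 t" unfolding W0_def
  proof (rule integral_mono)
    fix x
    have "f x - dd \<le> f0 x" using dd_bound(1)[of x] by linarith
    then have "exp (- dd) * exp (f x) \<le> exp (f0 x)" by (simp add: exp_add[symmetric])
    then show "exp (- dd) * (Q x t * exp (f x)) \<le> Q x t * exp (f0 x)"
      using Q_nonneg[of x t] by (metis mult.left_commute mult_left_mono)
  qed (use i0 iW in auto)
  finally show "exp (- dd) * Sk 0 0 t \<le> W0 t" .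
  have "W0 t \<le> (\<integral>x. exp dd * (Q x t * exp (f x)) \<partial>PX)" unfolding W0_def
  proof (rule integral_mono)
    fix x
    have "f0 x \<le> dd + f x" using dd_bound(1)[of x] by linarith
    then have "exp (f0 x) \<le> exp dd * exp (f x)" by (simp add: exp_add[symmetric])
    then show "Q x t * exp (f0 x) \<le> exp dd * (Q x t * exp (f x))"
      using Q_nonneg[of x t] by (metis mult.left_commute mult_left_mono)
  qed (use i0 iW in auto)
  also have "\<dots> = exp dd * Sk 0 0 t" by (simp add: Sk_zero)
  finally show "W0 t \<le> exp dd * Sk 0 0 t" .
qed

definition "mf1 = (\<integral>x. f1 x \<partial>PX)"
definition "Var = (\<integral>x. (f1 x - mf1)^2 \<partial>PX)"

lemma var_min: "Var \<le> (\<integral>x. (f1 x - c)^2 \<partial>PX)"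
proof -
  have "(\<integral>x. (f1 x - c)^2 \<partial>PX) - Var = (\<integral>x. (mf1 - c) * (2 * f1 x - c - mf1) \<partial>PX)"
  proof -
    have "(\<lambda>x. (mf1 - c) * (2 * f1 x - c - mf1)) = (\<lambda>x. (f1 x - c)^2 - (f1 x - mf1)^2)"
      by (auto simp: fun_eq_iff power2_eq_square algebra_simps)
    then show ?thesis unfolding Var_def using f1sq_int[of c] f1sq_int[of mf1] by simp
  qed
  also have "\<dots> = (mf1 - c) * (2 * mf1 - c - mf1)"
  proof -
    have ic: "integrable PX (\<lambda>x. a)" for a :: real by (rule finite_measure.integrable_const[OF fin])
    have "(\<integral>x. 2 * f1 x - c - mf1 \<partial>PX) = 2 * mf1 - c - mf1"
      using f1_int ic prob_space.prob_space[OF PX(1)] unfolding mf1_def by simp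
    then show ?thesis by simp
  qed
  also have "\<dots> = (mf1 - c)^2" by (simp add: power2_eq_square algebra_simps)
  finally show ?thesis by (smt (verit) zero_le_power2)
qed

lemma psi_bounds:
  assumes t: "t \<in> {0..1}"
  shows "exp (- dd) * exp (- Bf) * q1 * Var \<le> (Sk 2 0 t / Sk 0 0 t - (Sk 1 0 t / Sk 0 0 t)^2) * W0 t"
    and "(Sk 2 0 t / Sk 0 0 t - (Sk 1 0 t / Sk 0 0 t)^2) * W0 t \<le> exp dd * exp Bf * (\<integral>x. (f1 x)^2 \<partial>PX)"
proof -
  define S where "S = Sk 0 0 t"
  define S1 where "S1 = Sk 1 0 t"
  define S2 where "S2 = Sk 2 0 t"
  define c where "c = S1 / S"
  have Spos: "0 < S" unfolding S_def using S0_pos[OF t, of 0 0] by simp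
  have i0: "integrable PX (\<lambda>x. Q x t * exp (f x))" using int_k[of t 0] by simp
  have i1: "integrable PX (\<lambda>x. Q x t * (exp (f x) * f1 x))" using int_k[of t 1] by simp
  have i2: "integrable PX (\<lambda>x. Q x t * (exp (f x) * (f1 x)^2))" using int_k[of t 2] by simp
  have S_eq: "S = (\<integral>x. Q x t * exp (f x) \<partial>PX)" "S1 = (\<integral>x. Q x t * (exp (f x) * f1 x) \<partial>PX)"
     "S2 = (\<integral>x. Q x t * (exp (f x) * (f1 x)^2) \<partial>PX)"
    unfolding S_def S1_def S2_def by (simp_all add: Sk_zero)
  define V where "V = (\<integral>x. Q x t * (exp (f x) * (f1 x - c)^2) \<partial>PX)"
  have "(\<lambda>x. Q x t * (exp (f x) * (f1 x - c)^2)) =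
     (\<lambda>x. Q x t * (exp (f x) * (f1 x)^2) - (2 * c) * (Q x t * (exp (f x) * f1 x)) + c^2 * (Q x t * exp (f x)))"
    by (auto simp: fun_eq_iff power2_eq_square algebra_simps)
  then have "V = S2 - 2 * c * S1 + c^2 * S" unfolding V_def S_eq using i0 i1 i2 by simp
  then have VS: "V = S2 - c^2 * S" unfolding c_def using Spos by (simp add: power2_eq_square field_simps)
  have psi_eq: "S2 / S - c^2 = V / S" using VS Spos by (simp add: field_simps)
  have V_low: "q1 * exp (- Bf) * Var \<le> V"
  proof -
    have "q1 * exp (- Bf) * Var \<le> q1 * exp (- Bf) * (\<integral>x. (f1 x - c)^2 \<partial>PX)"
      using var_min[of c] q1_pos by (intro mult_left_mono) auto
    also have "\<dots> = (\<integral>x. q1 * exp (- Bf) * (f1 x - c)^2 \<partial>PX)" by simp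
    also have "\<dots> \<le> V" unfolding V_def
    proof (rule integral_mono)
      fix x
      have "q1 \<le> Q x t" using q1_le t by auto
      moreover have "exp (- Bf) \<le> exp (f x)" using Bs(1)[of x] by simp
      ultimately have "q1 * exp (- Bf) \<le> Q x t * exp (f x)" using q1_pos by (intro mult_mono) auto
      then show "q1 * exp (- Bf) * (f1 x - c)^2 \<le> Q x t * (exp (f x) * (f1 x - c)^2)"
        by (metis mult.assoc mult_right_mono zero_le_power2)
    next
      show "integrable PX (\<lambda>x. Q x t * (exp (f x) * (f1 x - c)^2))"
      proof (rule int_Qw[where B="exp Bf * (B1 + \<bar>c\<bar>)^2"])
        fix x
        have "\<bar>f1 x - c\<bar> \<le> B1 + \<bar>c\<bar>" using Bs(2)[of x] by linarith
        then have "\<bar>f1 x - c\<bar>^2 \<le> (B1 + \<bar>c\<bar>)^2" by (intro power_mono) auto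
        moreover have "exp (f x) \<le> exp Bf" using Bs(1)[of x] by simp
        ultimately show "\<bar>exp (f x) * (f1 x - c)^2\<bar> \<le> exp Bf * (B1 + \<bar>c\<bar>)^2"
          by (simp add: abs_mult mult_mono)
      qed simp
    qed (use f1sq_int[of c] in auto)
    finally show ?thesis .
  qed
  have V_nonneg: "0 \<le> V" unfolding V_def using Q_nonneg
    by (intro Bochner_Integration.integral_nonneg) auto
  have "exp (- dd) * exp (- Bf) * q1 * Var = exp (- dd) * (q1 * exp (- Bf) * Var)" by simp
  also have "\<dots> \<le> exp (- dd) * V" using V_low by simp
  also have "\<dots> = V / S * (exp (- dd) * S)" using Spos by simp
  also have "\<dots> \<le> V / S * W0 t"
    using W0_vs(1)[of t] V_nonneg Spos unfolding S_def by (intro mult_left_mono) auto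
  finally show "exp (- dd) * exp (- Bf) * q1 * Var \<le> (Sk 2 0 t / Sk 0 0 t - (Sk 1 0 t / Sk 0 0 t)^2) * W0 t"
    using psi_eq unfolding S_def S1_def S2_def c_def by simp
  have S2_up: "S2 \<le> exp Bf * (\<integral>x. (f1 x)^2 \<partial>PX)"
  proof -
    have "S2 \<le> (\<integral>x. exp Bf * (f1 x)^2 \<partial>PX)" unfolding S_eq
    proof (rule integral_mono)
      fix x
      have "Q x t * exp (f x) \<le> 1 * exp Bf" using Q_le1[of x t] Q_nonneg[of x t] Bs(1)[of x] by (intro mult_mono) auto
      then show "Q x t * (exp (f x) * (f1 x)^2) \<le> exp Bf * (f1 x)^2"
        by (metis mult.assoc mult_1 mult_right_mono zero_le_power2)
    qed (use i2 f1sq_int[of 0] in auto)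
    then show ?thesis by simp
  qed
  have S2_nonneg: "0 \<le> S2" unfolding S_eq using Q_nonneg by (intro Bochner_Integration.integral_nonneg) auto
  have "(S2 / S - c^2) * W0 t \<le> (S2 / S) * W0 t"
    using W0_bounds(1)[of t] by (intro mult_right_mono) auto
  also have "\<dots> \<le> (S2 / S) * (exp dd * S)"
    using W0_vs(2)[of t] S2_nonneg Spos unfolding S_def by (intro mult_left_mono) auto
  also have "\<dots> = exp dd * S2" using Spos by simp
  also have "\<dots> \<le> exp dd * (exp Bf * (\<integral>x. (f1 x)^2 \<partial>PX))" using S2_up by simp
  finally show "(Sk 2 0 t / Sk 0 0 t - (Sk 1 0 t / Sk 0 0 t)^2) * W0 t \<le> exp dd * exp Bf * (\<integral>x. (f1 x)^2 \<partial>PX)"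
    unfolding S_def S1_def S2_def c_def by simp
qed

end

context surv begin

lemma psi_abs: "t \<in> {0..1} \<Longrightarrow> \<bar>(Sk 2 0 t / Sk 0 0 t - (Sk 1 0 t / Sk 0 0 t)^2) * W0 t\<bar> \<le> c2 0 * exp B0"
  unfolding c2_def by (intro W0_mul alg2 ratio_b) simp_all

lemma psi_meas: "(\<lambda>t. (Sk 2 0 t / Sk 0 0 t - (Sk 1 0 t / Sk 0 0 t)^2) * W0 t) \<in> borel_measurable borel"
  by (intro borel_measurable_times borel_measurable_divide borel_measurable_diff borel_measurable_power Sk_meas W0_meas)

lemma main_loc:
  "\<exists>g' D.
      (\<forall>\<^sub>F e in nhds 0. ((\<lambda>e. ell_star PX (atrisk KS KC) lam f0 (\<lambda>x. f x + e * f1 x))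
          has_real_derivative g' e) (at e))
    \<and> (g' has_real_derivative D) (at 0)
    \<and> exp (- supnorm (\<lambda>x. f x - f0 x)) * exp (- supnorm f) * (LINT t:{0..1}|lborel. lam t)
        * (INF x. atrisk KS KC x 1) * (L2norm PX (\<lambda>x. f1 x - (\<integral>y. f1 y \<partial>PX)))\<^sup>2 \<le> D
    \<and> D \<le> exp (supnorm (\<lambda>x. f x - f0 x)) * exp (supnorm f) * (LINT t:{0..1}|lborel. lam t)
        * (L2norm PX f1)\<^sup>2"
proof -
  define g' where "g' e = (LINT t:{0..1}|lborel. Sk 1 e t / Sk 0 e t * W0 t * lam t) - (LINT t:{0..1}|lborel. Bt t * lam t)" for e
  define psi where "psi t = (Sk 2 0 t / Sk 0 0 t - (Sk 1 0 t / Sk 0 0 t)^2) * W0 t" for t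
  define D where "D = (LINT t:{0..1}|lborel. psi t * lam t)"
  define Lam where "Lam = (LINT t:{0..1}|lborel. lam t)"
  have ell_eq: "ell_star PX (atrisk KS KC) lam f0 (\<lambda>x. f x + e * f1 x) =
      (LINT t:{0..1}|lborel. ln (Sk 0 e t) * W0 t * lam t) - (LINT t:{0..1}|lborel. (At t + e * Bt t) * lam t)" for e
    by (simp add: ell_star_def Sfun_def Sk_def W0_def inner_eq)
  have d1: "((\<lambda>e. ell_star PX (atrisk KS KC) lam f0 (\<lambda>x. f x + e * f1 x)) has_real_derivative g' e) (at e)" for e
    unfolding ell_eq g'_def by (intro DERIV_diff T1 T3)
  have d2: "(g' has_real_derivative D) (at 0)"
  proof -
    have "((\<lambda>e. (LINT t:{0..1}|lborel. Sk 1 e t / Sk 0 e t * W0 t * lam t) - (LINT t:{0..1}|lborel. Bt t * lam t))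
        has_real_derivative D - 0) (at 0)"
      unfolding D_def psi_def by (intro DERIV_diff T2 DERIV_const)
    then show ?thesis unfolding g'_def[abs_def] by simp
  qed
  have psi_int: "set_integrable lborel {0..1} (\<lambda>t. psi t * lam t)"
    unfolding psi_def by (rule set_int_bdd[OF psi_meas psi_abs])
  have c_int: "set_integrable lborel {0..1} (\<lambda>t. K * lam t)" for K
    by (rule set_int_bdd[where C="\<bar>K\<bar>"]) auto
  have var_nonneg: "0 \<le> Var" unfolding Var_def by (intro Bochner_Integration.integral_nonneg) auto
  have L2a: "(L2norm PX (\<lambda>x. f1 x - (\<integral>y. f1 y \<partial>PX)))\<^sup>2 = Var"
    unfolding L2norm_def Var_def mf1_def using var_nonneg[unfolded Var_def mf1_def] by simp
  have L2b: "(L2norm PX f1)\<^sup>2 = (\<integral>x. (f1 x)^2 \<partial>PX)"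
    unfolding L2norm_def by (simp add: Bochner_Integration.integral_nonneg)
  have low: "(exp (- dd) * exp (- Bf) * q1 * Var) * Lam \<le> D"
  proof -
    have "(exp (- dd) * exp (- Bf) * q1 * Var) * Lam = (LINT t:{0..1}|lborel. (exp (- dd) * exp (- Bf) * q1 * Var) * lam t)"
      unfolding Lam_def by simp
    also have "\<dots> \<le> D" unfolding D_def
    proof (rule set_integral_mono[OF c_int psi_int])
      fix t :: real assume t: "t \<in> {0..1}"
      show "exp (- dd) * exp (- Bf) * q1 * Var * lam t \<le> psi t * lam t"
        unfolding psi_def using psi_bounds(1)[OF t] lam_nonneg[OF t] by (rule mult_right_mono)
    qed
    finally show ?thesis .
  qed
  have up: "D \<le> (exp dd * exp Bf * (\<integral>x. (f1 x)^2 \<partial>PX)) * Lam"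
  proof -
    have "D \<le> (LINT t:{0..1}|lborel. (exp dd * exp Bf * (\<integral>x. (f1 x)^2 \<partial>PX)) * lam t)" unfolding D_def
    proof (rule set_integral_mono[OF psi_int c_int])
      fix t :: real assume t: "t \<in> {0..1}"
      show "psi t * lam t \<le> exp dd * exp Bf * (\<integral>x. (f1 x)^2 \<partial>PX) * lam t"
        unfolding psi_def using psi_bounds(2)[OF t] lam_nonneg[OF t] by (rule mult_right_mono)
    qed
    also have "\<dots> = (exp dd * exp Bf * (\<integral>x. (f1 x)^2 \<partial>PX)) * Lam" unfolding Lam_def by simp
    finally show ?thesis .
  qed
  show ?thesis
  proof (intro exI conjI)
    show "\<forall>\<^sub>F e in nhds 0. ((\<lambda>e. ell_star PX (atrisk KS KC) lam f0 (\<lambda>x. f x + e * f1 x)) has_real_derivative g' e) (at e)"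
      using d1 by simp
    show "(g' has_real_derivative D) (at 0)" by (rule d2)
    show "exp (- supnorm (\<lambda>x. f x - f0 x)) * exp (- supnorm f) * (LINT t:{0..1}|lborel. lam t)
        * (INF x. atrisk KS KC x 1) * (L2norm PX (\<lambda>x. f1 x - (\<integral>y. f1 y \<partial>PX)))\<^sup>2 \<le> D"
      using low unfolding L2a dd_def Bf_def q1_def Lam_def by (simp add: mult_ac)
    show "D \<le> exp (supnorm (\<lambda>x. f x - f0 x)) * exp (supnorm f) * (LINT t:{0..1}|lborel. lam t)
        * (L2norm PX f1)\<^sup>2"
      using up unfolding L2b dd_def Bf_def Lam_def by (simp add: mult_ac)
  qed
qed

end

theorem mainTheorem12:
  fixes PX :: "'a::metric_space measure"
    and KS KC :: "'a \<Rightarrow> real measure"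
    and lam :: "real \<Rightarrow> real"
    and f0 f f1 :: "'a \<Rightarrow> real"
  assumes lc: "locally_compact_space (euclidean :: 'a topology)"
    and sc: "open_sigma_compact TYPE('a)"
    and PX: "prob_space PX" "sets PX = sets borel"
    and KS: "KS \<in> borel \<rightarrow>\<^sub>M prob_algebra borel" "\<And>x. measure (KS x) {..0} = 0"
    and KC: "KC \<in> borel \<rightarrow>\<^sub>M prob_algebra borel" "\<And>x. measure (KC x) {..0} = 0"
    and q1pos: "(INF x. atrisk KS KC x 1) > 0"
    and lam_meas: "lam \<in> borel_measurable lborel"
    and lam_nonneg: "\<And>t. t \<in> {0..1} \<Longrightarrow> lam t \<ge> 0"
    and lam_int: "set_integrable lborel {0..1} lam"
    and f0: "f0 \<in> bdd_meas" "(\<integral>x. f0 x \<partial>PX) = 0"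
    and hazard: "AE x in PX. \<forall>t\<in>{0..1}.
        measure (KS x) {t<..} = exp (- (LINT s:{0..t}|lborel. lam s) * exp (f0 x))"
    and f: "f \<in> bdd_meas"
    and f1: "f1 \<in> bdd_meas"
  shows "\<exists>g' D.
      (\<forall>\<^sub>F e in nhds 0. ((\<lambda>e. ell_star PX (atrisk KS KC) lam f0 (\<lambda>x. f x + e * f1 x))
          has_real_derivative g' e) (at e))
    \<and> (g' has_real_derivative D) (at 0)
    \<and> exp (- supnorm (\<lambda>x. f x - f0 x)) * exp (- supnorm f) * (LINT t:{0..1}|lborel. lam t)
        * (INF x. atrisk KS KC x 1) * (L2norm PX (\<lambda>x. f1 x - (\<integral>y. f1 y \<partial>PX)))\<^sup>2 \<le> D
    \<and> D \<le> exp (supnorm (\<lambda>x. f x - f0 x)) * exp (supnorm f) * (LINT t:{0..1}|lborel. lam t)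
        * (L2norm PX f1)\<^sup>2"
  proof -
  interpret surv PX KS KC lam f0 f f1
    by (rule surv.intro[OF PX KS(1) KC(1) q1pos lam_meas lam_nonneg lam_int f0(1) f f1])
  show ?thesis by (rule main_loc)
qed
end
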